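(* Let $G$ be a finite simple graph without isolated vertices and let $d\ge 2$ be an integer. Then Dom has a winning strategy in the $(d:1)$-game played on $G$ (whichever player starts).
   Context: For a vertex $v$, $N[v]$ is its closed neighborhood. Colors are $p$ (purple) and $b$ (blue); $V_p,V_b$ denote the current sets of vertices of each color. A single coloring step (by either player, who may use either color) consists of choosing a vertex $v$ and a color $c$ such that (i) $v$ is uncolored and (ii) some $u\in N[v]$ satisfies $N[u]\cap V_c=\emptyset$ (evaluated just before this step); then $v$ gets color $c$. In the $(d:s)$-game, Dom and Sepy take turns; in each of his turns Dom sequentially performs exactly $d$ such coloring steps (or fewer only when fewer legal steps remain), and in each of his turns Sepy performs at most $s$ such steps (he may also pass). The game terminates as soon as either (s* ) some vertex $v$ has $N[v]\subseteq V_p$ or $N[v]\subseteq V_b$ — Sepy wins; or (d* ) both $V_p$ and $V_b$ are dominating sets of $G$ — Dom wins. *)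

theory Defs
  imports Main
begin

datatype color = Purple | Blue
datatype player = Dom | Sepy

type_synonym 'a coloring = "'a \<Rightarrow> color option"

definition cnbhd :: "('a \<Rightarrow> 'a \<Rightarrow> bool) \<Rightarrow> 'a set \<Rightarrow> 'a \<Rightarrow> 'a set" where
  "cnbhd E V v = {u \<in> V. u = v \<or> E v u}"

definition colored :: "'a set \<Rightarrow> 'a coloring \<Rightarrow> color \<Rightarrow> 'a set" where
  "colored V col c = {v \<in> V. col v = Some c}"

definition legal_step :: "('a \<Rightarrow> 'a \<Rightarrow> bool) \<Rightarrow> 'a set \<Rightarrow> 'a coloring \<Rightarrow> 'a \<Rightarrow> color \<Rightarrow> bool" where
  "legal_step E V col v c \<longleftrightarrow> v \<in> V \<and> col v = None \<and>
     (\<exists>u \<in> cnbhd E V v. cnbhd E V u \<inter> colored V col c = {})"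

definition dominating :: "('a \<Rightarrow> 'a \<Rightarrow> bool) \<Rightarrow> 'a set \<Rightarrow> 'a set \<Rightarrow> bool" where
  "dominating E V D \<longleftrightarrow> D \<subseteq> V \<and> (\<forall>v \<in> V. cnbhd E V v \<inter> D \<noteq> {})"

definition sepy_wins_now :: "('a \<Rightarrow> 'a \<Rightarrow> bool) \<Rightarrow> 'a set \<Rightarrow> 'a coloring \<Rightarrow> bool" where
  "sepy_wins_now E V col \<longleftrightarrow>
     (\<exists>v \<in> V. cnbhd E V v \<subseteq> colored V col Purple \<or> cnbhd E V v \<subseteq> colored V col Blue)"

definition dom_wins_now :: "('a \<Rightarrow> 'a \<Rightarrow> bool) \<Rightarrow> 'a set \<Rightarrow> 'a coloring \<Rightarrow> bool" where
  "dom_wins_now E V col \<longleftrightarrow>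
     dominating E V (colored V col Purple) \<and> dominating E V (colored V col Blue)"

(* Positions of the (d:s)-game: (coloring, player to move, number of steps
   still available to that player in the current turn).
   dom_can_win E V d s col p j  holds iff Dom has a winning strategy from this position.
   The game ends as soon as s-star or d-star holds (checked after every single step). *)
inductive dom_can_win ::
  "('a \<Rightarrow> 'a \<Rightarrow> bool) \<Rightarrow> 'a set \<Rightarrow> nat \<Rightarrow> nat \<Rightarrow> 'a coloring \<Rightarrow> player \<Rightarrow> nat \<Rightarrow> bool"
  for E V d s where
  terminal_win:
    "\<lbrakk> \<not> sepy_wins_now E V col; dom_wins_now E V col \<rbrakk>
     \<Longrightarrow> dom_can_win E V d s col p j"
| dom_step:
    "\<lbrakk> \<not> sepy_wins_now E V col; \<not> dom_wins_now E V col; j > 0;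
       legal_step E V col v c;
       dom_can_win E V d s (col(v := Some c)) (if j = 1 then Sepy else Dom) (if j = 1 then s else j - 1) \<rbrakk>
     \<Longrightarrow> dom_can_win E V d s col Dom j"
| dom_end_turn:
    "\<lbrakk> \<not> sepy_wins_now E V col; \<not> dom_wins_now E V col;
       j = 0 \<or> \<not> (\<exists>v c. legal_step E V col v c);
       dom_can_win E V d s col Sepy s \<rbrakk>
     \<Longrightarrow> dom_can_win E V d s col Dom j"
| sepy_turn:
    "\<lbrakk> \<not> sepy_wins_now E V col; \<not> dom_wins_now E V col;
       dom_can_win E V d s col Dom d;
       \<forall>v c. j > 0 \<and> legal_step E V col v c \<longrightarrow>
          dom_can_win E V d s (col(v := Some c)) Sepy (j - 1) \<rbrakk>
     \<Longrightarrow> dom_can_win E V d s col Sepy j"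

end

theory Submission
  imports Defs
begin

fun oth :: "color \<Rightarrow> color" where
  "oth Purple = Blue" | "oth Blue = Purple"

lemma oth_neq [simp]: "oth c \<noteq> c" "c \<noteq> oth c" by (cases c; simp)+
lemma oth_oth [simp]: "oth (oth c) = c" by (cases c; simp)
lemma col_cases: "a \<noteq> c \<Longrightarrow> a = oth c" by (cases a; cases c; simp)
lemma ex_color: "(\<exists>c. P c) \<longleftrightarrow> P Purple \<or> P Blue" by (metis color.exhaust)
lemma all_color: "(\<forall>c. P c) \<longleftrightarrow> P Purple \<and> P Blue" by (metis color.exhaust)

locale gr =
  fixes E :: "'a \<Rightarrow> 'a \<Rightarrow> bool" and V :: "'a set"
  assumes fin: "finite V"
    and EV: "\<And>u v. E u v \<Longrightarrow> u \<in> V \<and> v \<in> V"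
    and sym: "\<And>u v. E u v \<Longrightarrow> E v u"
    and irr: "\<And>v. \<not> E v v"
    and noiso: "\<And>v. v \<in> V \<Longrightarrow> \<exists>u. E v u"
begin

abbreviation nb where "nb \<equiv> cnbhd E V"

lemma nb_mem: "x \<in> nb u \<longleftrightarrow> x \<in> V \<and> (x = u \<or> E u x)"
  by (auto simp: cnbhd_def)

definition safe where "safe col u \<longleftrightarrow> (\<forall>c. \<exists>x\<in>nb u. col x = Some c)"
definition Uns where "Uns col = {u\<in>V. col u \<noteq> None \<and> \<not> safe col u}"
definition unc where "unc col y = {n. E y n \<and> col n = None}"
definition cnt where "cnt col = card {v\<in>V. col v = None}"

lemma sepy_iff: "sepy_wins_now E V col \<longleftrightarrow> (\<exists>u\<in>V. \<exists>c. \<forall>x\<in>nb u. col x = Some c)"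
  unfolding sepy_wins_now_def colored_def ex_color cnbhd_def by blast

lemma dom_iff: "dom_wins_now E V col \<longleftrightarrow> (\<forall>u\<in>V. safe col u)"
  unfolding dom_wins_now_def dominating_def colored_def safe_def all_color cnbhd_def
  by blast

lemma legal_iff: "legal_step E V col v c \<longleftrightarrow>
   v \<in> V \<and> col v = None \<and> (\<exists>u\<in>nb v. \<forall>x\<in>nb u. col x \<noteq> Some c)"
  unfolding legal_step_def colored_def cnbhd_def by blast

lemma self_nb: "u \<in> V \<Longrightarrow> u \<in> nb u" by (simp add: nb_mem)

lemma unsafe_lacks:
  assumes "y \<in> V" "col y = Some c" "\<not> safe col y"
  shows "\<forall>x\<in>nb y. col x \<noteq> Some (oth c)"
proof -
  obtain c1 where c1: "\<forall>x\<in>nb y. col x \<noteq> Some c1" using assms(3) unfolding safe_def by blast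
  have "c1 \<noteq> c" using c1 self_nb[OF assms(1)] assms(2) by auto
  hence "c1 = oth c" by (rule col_cases)
  thus ?thesis using c1 by simp
qed

lemma unc_exists:
  assumes "\<not> sepy_wins_now E V col" "y \<in> Uns col"
  shows "\<exists>n. n \<in> unc col y"
proof (rule ccontr)
  assume na: "\<not> (\<exists>n. n \<in> unc col y)"
  from assms(2) obtain c where y: "y \<in> V" "col y = Some c" "\<not> safe col y"
    unfolding Uns_def by auto
  have l: "\<forall>x\<in>nb y. col x \<noteq> Some (oth c)" using unsafe_lacks[OF y] .
  have "\<forall>x\<in>nb y. col x = Some c"
  proof
    fix x assume x: "x \<in> nb y"
    show "col x = Some c"
    proof (cases "x = y")
      case True thus ?thesis using y by simp
    next
      case False
      hence "E y x" using x by (simp add: nb_mem)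
      hence "col x \<noteq> None" using na unfolding unc_def by auto
      then obtain a where a: "col x = Some a" by auto
      have "a \<noteq> oth c" using l x a by auto
      hence "a = c" using col_cases by fastforce
      thus ?thesis using a by simp
    qed
  qed
  thus False using assms(1) y unfolding sepy_iff by blast
qed

lemma safe_mono:
  assumes "col v = None" "safe col u"
  shows "safe (col(v := Some c)) u"
  using assms unfolding safe_def by (metis fun_upd_other option.distinct(1))

lemma legal_no_mono:
  assumes "legal_step E V col v c"
  shows "\<not> (\<forall>x\<in>nb v. (col(v := Some c)) x = Some c)"
proof
  assume all: "\<forall>x\<in>nb v. (col(v := Some c)) x = Some c"
  from assms obtain u where v: "v \<in> V" "col v = None" and u: "u \<in> nb v"
    and fr: "\<forall>x\<in>nb u. col x \<noteq> Some c" unfolding legal_iff by blast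
  show False
  proof (cases "u = v")
    case True
    obtain n where n: "E v n" using noiso[OF v(1)] by blast
    have nv: "n \<noteq> v" using n irr by auto
    have "n \<in> nb v" using n EV by (simp add: nb_mem)
    hence "col n = Some c" using all nv by auto
    thus False using fr True \<open>n \<in> nb v\<close> by auto
  next
    case False
    have "col u = Some c" using all u False by auto
    moreover have "u \<in> nb u" using u by (simp add: nb_mem)
    ultimately show False using fr by auto
  qed
qed

lemma G1:
  assumes "\<not> sepy_wins_now E V col" "legal_step E V col v c"
    "sepy_wins_now E V (col(v := Some c))"
  shows "\<exists>u. u \<in> Uns col \<and> u \<noteq> v \<and> col u = Some c \<and> unc col u = {v}"
proof -
  from assms(2) have v: "v \<in> V" "col v = None" unfolding legal_iff by auto
  from assms(3) obtain u c0 where u: "u \<in> V" and all: "\<forall>x\<in>nb u. (col(v := Some c)) x = Some c0"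
    unfolding sepy_iff by blast
  have uv: "u \<noteq> v"
  proof
    assume uv: "u = v"
    hence "c0 = c" using all self_nb[OF u] by auto
    thus False using legal_no_mono[OF assms(2)] all uv by simp
  qed
  have vin: "v \<in> nb u"
  proof (rule ccontr)
    assume "v \<notin> nb u"
    hence "\<forall>x\<in>nb u. col x = Some c0" using all by (metis fun_upd_other)
    thus False using assms(1) u unfolding sepy_iff by blast
  qed
  have cc: "c = c0" using all vin by auto
  have cu: "col u = Some c" using all uv cc self_nb[OF u] by auto
  have Euv: "E u v" using vin uv by (simp add: nb_mem)
  have unc: "unc col u = {v}"
  proof
    show "unc col u \<subseteq> {v}"
    proof
      fix n assume "n \<in> unc col u"
      hence n: "E u n" "col n = None" unfolding unc_def by auto
      have "n \<in> nb u" using n EV by (simp add: nb_mem)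
      hence "(col(v := Some c)) n = Some c0" using all by auto
      thus "n \<in> {v}" using n(2) by (cases "n = v") auto
    qed
    show "{v} \<subseteq> unc col u" using Euv v unfolding unc_def by auto
  qed
  have "\<not> safe col u"
  proof
    assume "safe col u"
    hence "safe (col(v := Some c)) u" by (rule safe_mono[of col v, OF v(2)])
    then obtain x where "x \<in> nb u" "(col(v := Some c)) x = Some (oth c0)"
      unfolding safe_def by blast
    thus False using all by auto
  qed
  hence "u \<in> Uns col" using u cu unfolding Uns_def by auto
  thus ?thesis using uv cu unc by blast
qed

lemma Uns_step:
  assumes "col v = None"
  shows "Uns (col(v := Some c)) \<subseteq> Uns col \<union> {v}"
  unfolding Uns_def using assms by (auto dest: safe_mono[where c=c])

lemma cnt_step:
  assumes "v \<in> V" "col v = None"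
  shows "cnt (col(v := Some c)) < cnt col"
proof -
  have "{x\<in>V. (col(v := Some c)) x = None} = {x\<in>V. col x = None} - {v}" by auto
  moreover have "v \<in> {x\<in>V. col x = None}" using assms by auto
  moreover have f: "finite {x\<in>V. col x = None}" using fin by simp
  ultimately show ?thesis unfolding cnt_def using card_Diff1_less[OF f] by simp
qed

lemma finUns: "finite (Uns col)" unfolding Uns_def using fin by auto

lemma safe_two:
  assumes "a \<in> nb u" "b \<in> nb u" "col a = Some c" "col b = Some (oth c)"
  shows "safe col u"
  unfolding safe_def
proof
  fix c0
  show "\<exists>x\<in>nb u. col x = Some c0"
  proof (cases "c0 = c")
    case True thus ?thesis using assms by blast
  next
    case False hence "c0 = oth c" by (rule col_cases)
    thus ?thesis using assms by blast
  qed
qed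

definition SI where "SI col \<longleftrightarrow> \<not> sepy_wins_now E V col \<and> (\<forall>y\<in>Uns col. \<forall>w\<in>Uns col. y = w)
  \<and> (\<forall>y\<in>Uns col. \<forall>c z. col y = Some c \<and> unc col y = {z} \<longrightarrow> \<not> legal_step E V col z c)"

definition Dinv where "Dinv col j \<longleftrightarrow> \<not> sepy_wins_now E V col \<and> 1 \<le> j \<and> card (Uns col) \<le> j
  \<and> card (Uns col) \<le> 2
  \<and> \<not> (\<exists>y w n. y \<in> Uns col \<and> w \<in> Uns col \<and> col y \<noteq> col w \<and> unc col y = {n} \<and> unc col w = {n})"

lemma card_le1_eq: "card (Uns col) \<le> 1 \<Longrightarrow> y \<in> Uns col \<Longrightarrow> w \<in> Uns col \<Longrightarrow> y = w"
  using card_le_Suc0_iff_eq[OF finUns] by auto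

lemma free_props:
  assumes "Uns col = {}" "\<not> sepy_wins_now E V col" "legal_step E V col v c"
  shows "\<not> sepy_wins_now E V (col(v := Some c)) \<and> Uns (col(v := Some c)) \<subseteq> {v}"
proof
  show "\<not> sepy_wins_now E V (col(v := Some c))"
  proof
    assume "sepy_wins_now E V (col(v := Some c))"
    from G1[OF assms(2,3) this] obtain u where "u \<in> Uns col" by blast
    thus False using assms(1) by simp
  qed
  have "col v = None" using assms(3) unfolding legal_iff by auto
  hence "Uns (col(v := Some c)) \<subseteq> Uns col \<union> {v}" by (rule Uns_step)
  thus "Uns (col(v := Some c)) \<subseteq> {v}" using assms(1) by simp
qed

lemma exists_legal:
  assumes "\<not> dom_wins_now E V col" "Uns col = {}"
  shows "\<exists>v c. legal_step E V col v c"
proof -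
  obtain u where u: "u \<in> V" "\<not> safe col u" using assms(1) unfolding dom_iff by blast
  then obtain c where c: "\<forall>x\<in>nb u. col x \<noteq> Some c" unfolding safe_def by blast
  have "col u = None" using assms(2) u unfolding Uns_def by auto
  hence "legal_step E V col u c" using u c self_nb[OF u(1)] unfolding legal_iff by blast
  thus ?thesis by blast
qed

lemma last_move:
  assumes U: "Uns col = {}" and ns: "\<not> sepy_wins_now E V col" and L: "legal_step E V col v c"
  shows "\<exists>v' c'. legal_step E V col v' c' \<and> SI (col(v' := Some c'))"
proof -
  have v: "v \<in> V" "col v = None" using L unfolding legal_iff by auto
  define col' where "col' = col(v := Some c)"
  have fp: "\<not> sepy_wins_now E V col'" "Uns col' \<subseteq> {v}"
    using free_props[OF U ns L] unfolding col'_def by auto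
  show ?thesis
  proof (cases "v \<in> Uns col' \<and> (\<exists>z. unc col' v = {z} \<and> legal_step E V col' z c)")
    case False
    have "SI col'" unfolding SI_def
    proof (intro conjI)
      show "\<not> sepy_wins_now E V col'" by (rule fp(1))
      show "\<forall>y\<in>Uns col'. \<forall>w\<in>Uns col'. y = w" using fp(2) by blast
      show "\<forall>y\<in>Uns col'. \<forall>c0 z. col' y = Some c0 \<and> unc col' y = {z} \<longrightarrow> \<not> legal_step E V col' z c0"
        using fp(2) False unfolding col'_def by auto
    qed
    thus ?thesis using L unfolding col'_def by blast
  next
    case True
    hence vU: "v \<in> Uns col'" and z: "\<exists>z. unc col' v = {z}" by auto
    have c'v: "col' v = Some c" unfolding col'_def by simp
    have lack: "\<forall>x\<in>nb v. col' x \<noteq> Some (oth c)"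
      using unsafe_lacks[where y=v and col=col' and c=c, OF v(1) c'v] vU unfolding Uns_def by auto
    show ?thesis
    proof (cases "\<exists>x. E v x \<and> col x \<noteq> None")
      case True
      then obtain x a where x: "E v x" "col x = Some a" by auto
      have xv: "x \<noteq> v" using x irr by auto
      have xnb: "x \<in> nb v" using x EV by (simp add: nb_mem)
      have "col' x = Some a" using x xv unfolding col'_def by simp
      hence "a \<noteq> oth c" using lack xnb by auto
      hence ac: "a = c" using col_cases by fastforce
      have L2: "legal_step E V col v (oth c)"
        unfolding legal_iff
      proof (intro conjI bexI[of _ v])
        show "v \<in> V" "col v = None" "v \<in> nb v" using v self_nb by auto
        show "\<forall>x\<in>nb v. col x \<noteq> Some (oth c)"
        proof
          fix y assume y: "y \<in> nb v"
          show "col y \<noteq> Some (oth c)"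
          proof (cases "y = v")
            case True thus ?thesis using v by simp
          next
            case False thus ?thesis using lack y unfolding col'_def by auto
          qed
        qed
      qed
      define col2 where "col2 = col(v := Some (oth c))"
      have fp2: "\<not> sepy_wins_now E V col2" "Uns col2 \<subseteq> {v}"
        using free_props[OF U ns L2] unfolding col2_def by auto
      have "col2 x = Some c" using x xv ac unfolding col2_def by simp
      moreover have "col2 v = Some (oth c)" unfolding col2_def by simp
      ultimately have "safe col2 v" using safe_two[OF xnb self_nb[OF v(1)]] by blast
      hence "Uns col2 = {}" using fp2(2) unfolding Uns_def by auto
      hence "SI col2" using fp2(1) unfolding SI_def by auto
      thus ?thesis using L2 unfolding col2_def by blast
    next
      case False
      hence nbr: "\<And>x. E v x \<Longrightarrow> col x = None" by auto
      from z obtain z where zz: "unc col' v = {z}" by auto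
      have "unc col' v = {x. E v x}"
        unfolding unc_def col'_def using nbr irr by fastforce
      hence Ez: "E v z" and onlyz: "\<And>x. E v x \<Longrightarrow> x = z" using zz by auto
      have zV: "z \<in> V" and cz: "col z = None" using EV[OF Ez] nbr[OF Ez] by auto
      have zv: "z \<noteq> v" using Ez irr by auto
      have L3: "legal_step E V col z c"
        unfolding legal_iff
      proof (intro conjI bexI[of _ v])
        show "z \<in> V" "col z = None" by (fact zV, fact cz)
        show "v \<in> nb z" using sym[OF Ez] v by (simp add: nb_mem)
        show "\<forall>x\<in>nb v. col x \<noteq> Some c"
          using v nbr by (auto simp: nb_mem)
      qed
      define col3 where "col3 = col(z := Some c)"
      have fp3: "\<not> sepy_wins_now E V col3" "Uns col3 \<subseteq> {z}"
        using free_props[OF U ns L3] unfolding col3_def by auto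
      have "SI col3" unfolding SI_def
      proof (intro conjI)
        show "\<not> sepy_wins_now E V col3" by (rule fp3(1))
        show "\<forall>y\<in>Uns col3. \<forall>w\<in>Uns col3. y = w" using fp3(2) by blast
        show "\<forall>y\<in>Uns col3. \<forall>c0 z'. col3 y = Some c0 \<and> unc col3 y = {z'} \<longrightarrow> \<not> legal_step E V col3 z' c0"
        proof (intro ballI allI impI)
          fix y c0 z' assume y: "y \<in> Uns col3" and h: "col3 y = Some c0 \<and> unc col3 y = {z'}"
          have yz: "y = z" using y fp3(2) by auto
          have c0: "c0 = c" using h yz unfolding col3_def by simp
          have "v \<in> unc col3 z" unfolding unc_def col3_def using sym[OF Ez] zv v by auto
          hence z'v: "z' = v" using h yz by auto
          show "\<not> legal_step E V col3 z' c0"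
          proof
            assume "legal_step E V col3 z' c0"
            then obtain u where u: "u \<in> nb v" and fr: "\<forall>x\<in>nb u. col3 x \<noteq> Some c"
              unfolding legal_iff z'v c0 by blast
            have "z \<in> nb u"
            proof (cases "u = v")
              case True thus ?thesis using Ez zV by (simp add: nb_mem)
            next
              case False hence "u = z" using u onlyz by (auto simp: nb_mem)
              thus ?thesis using zV by (simp add: nb_mem)
            qed
            moreover have "col3 z = Some c" unfolding col3_def by simp
            ultimately show False using fr by auto
          qed
        qed
      qed
      thus ?thesis using L3 unfolding col3_def by blast
    qed
  qed
qed

lemma fix_move:
  assumes D: "Dinv col j" and y: "y \<in> Uns col"
  shows "\<exists>n c'. legal_step E V col n c' \<and> \<not> sepy_wins_now E V (col(n := Some c'))
           \<and> Uns (col(n := Some c')) \<subseteq> Uns col - {y}"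
proof -
  from y obtain cy where yV: "y \<in> V" and cy: "col y = Some cy" and ns: "\<not> safe col y"
    unfolding Uns_def by auto
  have ns0: "\<not> sepy_wins_now E V col" and c2: "card (Uns col) \<le> 2"
    and nodl: "\<not> (\<exists>y w n. y \<in> Uns col \<and> w \<in> Uns col \<and> col y \<noteq> col w \<and> unc col y = {n} \<and> unc col w = {n})"
    using D unfolding Dinv_def by auto
  have "\<exists>n\<in>unc col y. \<forall>w\<in>Uns col. w \<noteq> y \<longrightarrow> \<not> (col w \<noteq> col y \<and> unc col w = {n})"
  proof -
    obtain n0 where n0: "n0 \<in> unc col y" using unc_exists[OF ns0 y] by blast
    show ?thesis
    proof (cases "\<forall>w\<in>Uns col. w \<noteq> y \<longrightarrow> \<not> (col w \<noteq> col y \<and> unc col w = {n0})")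
      case True thus ?thesis using n0 by blast
    next
      case False
      then obtain w where w: "w \<in> Uns col" "w \<noteq> y" "col w \<noteq> col y" "unc col w = {n0}" by blast
      have only: "\<And>w'. w' \<in> Uns col \<Longrightarrow> w' \<noteq> y \<Longrightarrow> w' = w"
      proof (rule ccontr)
        fix w' assume w': "w' \<in> Uns col" "w' \<noteq> y" "w' \<noteq> w"
        have "{y, w, w'} \<subseteq> Uns col" using y w w' by auto
        hence "card {y, w, w'} \<le> card (Uns col)" using finUns card_mono by blast
        moreover have "card {y, w, w'} = 3" using w w' by auto
        ultimately show False using c2 by simp
      qed
      have "\<exists>n1\<in>unc col y. n1 \<noteq> n0"
      proof (rule ccontr)
        assume "\<not> (\<exists>n1\<in>unc col y. n1 \<noteq> n0)"
        hence "unc col y = {n0}" using n0 by blast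
        thus False using nodl y w by blast
      qed
      then obtain n1 where n1: "n1 \<in> unc col y" "n1 \<noteq> n0" by blast
      have "\<forall>w'\<in>Uns col. w' \<noteq> y \<longrightarrow> \<not> (col w' \<noteq> col y \<and> unc col w' = {n1})"
        using only w(4) n1(2) by blast
      thus ?thesis using n1 by blast
    qed
  qed
  then obtain n where n: "n \<in> unc col y"
    and good: "\<forall>w\<in>Uns col. w \<noteq> y \<longrightarrow> \<not> (col w \<noteq> col y \<and> unc col w = {n})" by blast
  have En: "E y n" and cn: "col n = None" using n unfolding unc_def by auto
  have nV: "n \<in> V" using EV[OF En] by auto
  have ny: "n \<noteq> y" using cn cy by auto
  have lack: "\<forall>x\<in>nb y. col x \<noteq> Some (oth cy)" using unsafe_lacks[OF yV cy ns] .
  have L: "legal_step E V col n (oth cy)"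
    unfolding legal_iff
  proof (intro conjI bexI[of _ y])
    show "n \<in> V" "col n = None" by (fact nV, fact cn)
    show "y \<in> nb n" using sym[OF En] yV by (simp add: nb_mem)
    show "\<forall>x\<in>nb y. col x \<noteq> Some (oth cy)" by (fact lack)
  qed
  define col' where "col' = col(n := Some (oth cy))"
  have nsp: "\<not> sepy_wins_now E V col'"
  proof
    assume "sepy_wins_now E V col'"
    from G1[OF ns0 L this[unfolded col'_def]] obtain u where
      u: "u \<in> Uns col" "u \<noteq> n" "col u = Some (oth cy)" "unc col u = {n}" by blast
    have "u \<noteq> y" using u(3) cy by auto
    moreover have "col u \<noteq> col y" using u(3) cy by auto
    ultimately show False using good u by blast
  qed
  have sy: "safe col' y"
  proof -
    have "col' y = Some cy" using cy ny unfolding col'_def by simp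
    moreover have "col' n = Some (oth cy)" unfolding col'_def by simp
    moreover have "n \<in> nb y" using En nV by (simp add: nb_mem)
    ultimately show ?thesis using safe_two[OF self_nb[OF yV]] by blast
  qed
  have sn: "safe col' n"
  proof -
    have "col' y = Some cy" using cy ny unfolding col'_def by simp
    moreover have "col' n = Some (oth cy)" unfolding col'_def by simp
    moreover have "y \<in> nb n" using sym[OF En] yV by (simp add: nb_mem)
    ultimately show ?thesis using safe_two[OF _ self_nb[OF nV]] by blast
  qed
  have "Uns col' \<subseteq> Uns col \<union> {n}" unfolding col'_def using cn by (rule Uns_step)
  hence "Uns col' \<subseteq> Uns col - {y}" using sy sn unfolding Uns_def by auto
  thus ?thesis using L nsp unfolding col'_def by blast
qed

lemma SI_Dinv:
  assumes "SI col" "2 \<le> d"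
  shows "Dinv col d"
proof -
  have eq: "\<forall>y\<in>Uns col. \<forall>w\<in>Uns col. y = w" using assms(1) unfolding SI_def by auto
  hence "card (Uns col) \<le> 1" using card_le_Suc0_iff_eq[OF finUns] by auto
  thus ?thesis using assms eq unfolding SI_def Dinv_def by auto
qed

lemma sepy_aux:
  assumes S: "SI col" and L: "legal_step E V col v c"
    and a: "a \<in> Uns col" "a \<noteq> v" "a \<in> Uns (col(v := Some c))" "v \<in> Uns (col(v := Some c))"
    and ne: "(col(v := Some c)) a \<noteq> (col(v := Some c)) v"
    and ua: "unc (col(v := Some c)) a = {n}" and uv: "unc (col(v := Some c)) v = {n}"
  shows False
proof -
  define col' where "col' = col(v := Some c)"
  have v: "v \<in> V" "col v = None" using L unfolding legal_iff by auto
  from a(1) obtain ca where aV: "a \<in> V" and ca: "col a = Some ca" unfolding Uns_def by auto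
  have ca': "col' a = Some ca" using ca a(2) unfolding col'_def by simp
  have cv': "col' v = Some c" unfolding col'_def by simp
  have "c \<noteq> ca" using ne ca' cv' unfolding col'_def by auto
  hence cc: "c = oth ca" by (rule col_cases)
  have nE: "\<not> E a v"
  proof
    assume "E a v"
    hence "v \<in> nb a" using v by (simp add: nb_mem)
    hence "safe col' a" using safe_two[OF self_nb[OF aV]] ca' cv' cc by blast
    thus False using a(3) unfolding Uns_def col'_def by auto
  qed
  have "unc col a = unc col' a"
    unfolding unc_def col'_def using nE by auto
  hence uca: "unc col a = {n}" using ua unfolding col'_def by simp
  have nl: "\<not> legal_step E V col n ca" using S a(1) ca uca unfolding SI_def by blast
  have nin: "n \<in> unc col' v" using uv unfolding col'_def by simp
  hence Evn: "E v n" and cn': "col' n = None" unfolding unc_def by auto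
  have nv: "n \<noteq> v" using cn' unfolding col'_def by auto
  have cn: "col n = None" using cn' nv unfolding col'_def by simp
  have lack: "\<forall>x\<in>nb v. col' x \<noteq> Some (oth c)"
    using unsafe_lacks[where y=v and col=col' and c=c, OF v(1) cv'] a(4) unfolding Uns_def col'_def by auto
  have "legal_step E V col n ca"
    unfolding legal_iff
  proof (intro conjI bexI[of _ v])
    show "n \<in> V" "col n = None" using EV[OF Evn] cn by auto
    show "v \<in> nb n" using sym[OF Evn] v by (simp add: nb_mem)
    show "\<forall>x\<in>nb v. col x \<noteq> Some ca"
    proof
      fix x assume x: "x \<in> nb v"
      show "col x \<noteq> Some ca"
      proof (cases "x = v")
        case True thus ?thesis using v by simp
      next
        case False
        hence "col x = col' x" unfolding col'_def by simp
        thus ?thesis using lack x cc by auto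
      qed
    qed
  qed
  thus False using nl by simp
qed

lemma sepy_move:
  assumes S: "SI col" and L: "legal_step E V col v c" and d: "2 \<le> d"
  shows "Dinv (col(v := Some c)) d"
proof -
  define col' where "col' = col(v := Some c)"
  have v: "v \<in> V" "col v = None" using L unfolding legal_iff by auto
  have ns0: "\<not> sepy_wins_now E V col" and eq: "\<forall>y\<in>Uns col. \<forall>w\<in>Uns col. y = w"
    using S unfolding SI_def by auto
  have nsp: "\<not> sepy_wins_now E V col'"
  proof
    assume "sepy_wins_now E V col'"
    from G1[OF ns0 L this[unfolded col'_def]] obtain u where
      u: "u \<in> Uns col" "col u = Some c" "unc col u = {v}" by blast
    thus False using S L unfolding SI_def by blast
  qed
  have c1: "card (Uns col) \<le> 1" using eq card_le_Suc0_iff_eq[OF finUns] by auto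
  have sub: "Uns col' \<subseteq> Uns col \<union> {v}" unfolding col'_def using v(2) by (rule Uns_step)
  have "card (Uns col') \<le> card (Uns col \<union> {v})"
    using card_mono[OF _ sub] finUns by auto
  also have "\<dots> \<le> card (Uns col) + 1" using card_Un_le[of "Uns col" "{v}"] by simp
  finally have c2: "card (Uns col') \<le> 2" using c1 by simp
  have nodl: "\<not> (\<exists>y w n. y \<in> Uns col' \<and> w \<in> Uns col' \<and> col' y \<noteq> col' w \<and> unc col' y = {n} \<and> unc col' w = {n})"
  proof
    assume "\<exists>y w n. y \<in> Uns col' \<and> w \<in> Uns col' \<and> col' y \<noteq> col' w \<and> unc col' y = {n} \<and> unc col' w = {n}"
    then obtain y w n where h: "y \<in> Uns col'" "w \<in> Uns col'" "col' y \<noteq> col' w" "unc col' y = {n}" "unc col' w = {n}"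
      by blast
    have yw: "y \<noteq> w" using h(3) by auto
    show False
    proof (cases "y = v")
      case True
      hence "w \<noteq> v" "w \<in> Uns col" using yw h(2) sub by auto
      thus False using sepy_aux[OF S L, of w n] h True unfolding col'_def by auto
    next
      case False
      hence yU: "y \<in> Uns col" using h(1) sub by auto
      show False
      proof (cases "w = v")
        case True
        thus False using sepy_aux[OF S L yU False, of n] h unfolding col'_def by auto
      next
        case False
        hence "w \<in> Uns col" using h(2) sub by auto
        thus False using eq yU yw by blast
      qed
    qed
  qed
  show ?thesis unfolding Dinv_def col'_def[symmetric] using nsp c2 d nodl by auto
qed

lemma main:
  assumes d: "2 \<le> d"
  shows "cnt col = k \<Longrightarrow> (Dinv col j \<longrightarrow> dom_can_win E V d 1 col Dom j)
     \<and> (SI col \<longrightarrow> dom_can_win E V d 1 col Sepy 1)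
     \<and> (Dinv col d \<longrightarrow> dom_can_win E V d 1 col Sepy 0)"
proof (induction k arbitrary: col j rule: less_induct)
  case (less k)
  have IH: "\<And>col' j'. cnt col' < cnt col \<Longrightarrow>
      (Dinv col' j' \<longrightarrow> dom_can_win E V d 1 col' Dom j')
     \<and> (SI col' \<longrightarrow> dom_can_win E V d 1 col' Sepy 1)
     \<and> (Dinv col' d \<longrightarrow> dom_can_win E V d 1 col' Sepy 0)"
    using less by blast
  have domp: "\<And>j. Dinv col j \<Longrightarrow> dom_can_win E V d 1 col Dom j"
  proof -
    fix j assume D: "Dinv col j"
    have ns: "\<not> sepy_wins_now E V col" and j1: "1 \<le> j" and cj: "card (Uns col) \<le> j"
      and c2: "card (Uns col) \<le> 2" using D unfolding Dinv_def by auto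
    show "dom_can_win E V d 1 col Dom j"
    proof (cases "dom_wins_now E V col")
      case True thus ?thesis using ns by (rule dom_can_win.terminal_win[rotated])
    next
      case nd: False
      show ?thesis
      proof (cases "Uns col = {}")
        case False
        then obtain y where y: "y \<in> Uns col" by blast
        from fix_move[OF D y] obtain n c' where L: "legal_step E V col n c'"
          and nsp: "\<not> sepy_wins_now E V (col(n := Some c'))"
          and sub: "Uns (col(n := Some c')) \<subseteq> Uns col - {y}" by blast
        define col' where "col' = col(n := Some c')"
        have nV: "n \<in> V" "col n = None" using L unfolding legal_iff by auto
        have lt: "cnt col' < cnt col" unfolding col'_def by (rule cnt_step[where col=col, OF nV])
        have "card (Uns col') \<le> card (Uns col - {y})"
          using card_mono[OF _ sub] finUns unfolding col'_def by auto
        also have "\<dots> = card (Uns col) - 1" using y finUns by simp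
        finally have cc: "card (Uns col') \<le> card (Uns col) - 1" .
        show ?thesis
        proof (cases "j = 1")
          case True
          hence "card (Uns col') = 0" using cc cj by simp
          hence "Uns col' = {}" using finUns[of col'] by simp
          hence "SI col'" using nsp unfolding SI_def col'_def by auto
          hence "dom_can_win E V d 1 col' Sepy 1" using IH[OF lt] by blast
          thus ?thesis using dom_can_win.dom_step[OF ns nd _ L, of 1] True
            unfolding col'_def by simp
        next
          case False
          have c1: "card (Uns col') \<le> 1" using cc c2 by simp
          have "Dinv col' (j - 1)" unfolding Dinv_def
          proof (intro conjI)
            show "\<not> sepy_wins_now E V col'" using nsp unfolding col'_def .
            show "1 \<le> j - 1" using False j1 by simp
            show "card (Uns col') \<le> j - 1" using cc cj by simp
            show "card (Uns col') \<le> 2" using c1 by simp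
            show "\<not> (\<exists>y w n. y \<in> Uns col' \<and> w \<in> Uns col' \<and> col' y \<noteq> col' w \<and> unc col' y = {n} \<and> unc col' w = {n})"
              using card_le1_eq[OF c1] by blast
          qed
          hence "dom_can_win E V d 1 col' Dom (j - 1)" using IH[OF lt] by blast
          thus ?thesis using dom_can_win.dom_step[OF ns nd _ L, of j] False j1
            unfolding col'_def by simp
        qed
      next
        case True
        obtain v c where L: "legal_step E V col v c" using exists_legal[OF nd True] by blast
        show ?thesis
        proof (cases "j = 1")
          case j: True
          from last_move[OF True ns L] obtain v' c' where L': "legal_step E V col v' c'"
            and S: "SI (col(v' := Some c'))" by blast
          have nV: "v' \<in> V" "col v' = None" using L' unfolding legal_iff by auto
          have lt: "cnt (col(v' := Some c')) < cnt col" by (rule cnt_step[where col=col, OF nV])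
          hence "dom_can_win E V d 1 (col(v' := Some c')) Sepy 1" using IH[OF lt] S by blast
          thus ?thesis using dom_can_win.dom_step[OF ns nd _ L', of 1] j by simp
        next
          case False
          define col' where "col' = col(v := Some c)"
          have fp: "\<not> sepy_wins_now E V col'" "Uns col' \<subseteq> {v}"
            using free_props[OF True ns L] unfolding col'_def by auto
          have nV: "v \<in> V" "col v = None" using L unfolding legal_iff by auto
          have lt: "cnt col' < cnt col" unfolding col'_def by (rule cnt_step[where col=col, OF nV])
          have c1: "card (Uns col') \<le> 1"
            using card_mono[OF _ fp(2)] by simp
          have "Dinv col' (j - 1)" unfolding Dinv_def
          proof (intro conjI)
            show "\<not> sepy_wins_now E V col'" by (fact fp(1))
            show "1 \<le> j - 1" using False j1 by simp
            show "card (Uns col') \<le> j - 1" using c1 False j1 by simp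
            show "card (Uns col') \<le> 2" using c1 by simp
            show "\<not> (\<exists>y w n. y \<in> Uns col' \<and> w \<in> Uns col' \<and> col' y \<noteq> col' w \<and> unc col' y = {n} \<and> unc col' w = {n})"
              using card_le1_eq[OF c1] by blast
          qed
          hence "dom_can_win E V d 1 col' Dom (j - 1)" using IH[OF lt] by blast
          thus ?thesis using dom_can_win.dom_step[OF ns nd _ L, of j] False j1
            unfolding col'_def by simp
        qed
      qed
    qed
  qed
  have sepy0: "Dinv col d \<Longrightarrow> dom_can_win E V d 1 col Sepy 0"
  proof -
    assume D: "Dinv col d"
    have ns: "\<not> sepy_wins_now E V col" using D unfolding Dinv_def by auto
    show ?thesis
    proof (cases "dom_wins_now E V col")
      case True thus ?thesis using ns by (rule dom_can_win.terminal_win[rotated])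
    next
      case False
      show ?thesis by (rule dom_can_win.sepy_turn[OF ns False domp[OF D]]) simp
    qed
  qed
  have sepy1: "SI col \<Longrightarrow> dom_can_win E V d 1 col Sepy 1"
  proof -
    assume S: "SI col"
    have ns: "\<not> sepy_wins_now E V col" using S unfolding SI_def by auto
    show ?thesis
    proof (cases "dom_wins_now E V col")
      case True thus ?thesis using ns by (rule dom_can_win.terminal_win[rotated])
    next
      case False
      show ?thesis
      proof (rule dom_can_win.sepy_turn[OF ns False domp[OF SI_Dinv[OF S d]]], intro allI impI)
        fix v c assume h: "(1::nat) > 0 \<and> legal_step E V col v c"
        hence L: "legal_step E V col v c" by simp
        have nV: "v \<in> V" "col v = None" using L unfolding legal_iff by auto
        have lt: "cnt (col(v := Some c)) < cnt col" by (rule cnt_step[where col=col, OF nV])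
        have "Dinv (col(v := Some c)) d" by (rule sepy_move[OF S L d])
        thus "dom_can_win E V d 1 (col(v := Some c)) Sepy (1 - 1)" using IH[OF lt] by simp
      qed
    qed
  qed
  show ?case using domp sepy0 sepy1 by blast
qed

lemma init:
  assumes "2 \<le> d"
  shows "SI (\<lambda>_. None) \<and> Dinv (\<lambda>_. None) d"
proof -
  have U: "Uns (\<lambda>_. None) = {}" unfolding Uns_def by simp
  have ns: "\<not> sepy_wins_now E V (\<lambda>_. None)" unfolding sepy_iff using self_nb by fastforce
  show ?thesis unfolding SI_def Dinv_def U using ns assms by simp
qed

end

theorem theorem10:
  fixes E :: "'a \<Rightarrow> 'a \<Rightarrow> bool" and V :: "'a set" and d :: nat
  assumes "finite V"
    and "\<And>u v. E u v \<Longrightarrow> u \<in> V \<and> v \<in> V"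
    and "\<And>u v. E u v \<Longrightarrow> E v u"
    and "\<And>v. \<not> E v v"
    and "\<And>v. v \<in> V \<Longrightarrow> \<exists>u. E v u"
    and "d \<ge> 2"
  shows "dom_can_win E V d 1 (\<lambda>_. None) Dom d \<and> dom_can_win E V d 1 (\<lambda>_. None) Sepy 1"
proof -
  interpret gr E V using assms(1-5) by unfold_locales auto
  have i: "SI (\<lambda>_. None) \<and> Dinv (\<lambda>_. None) d" using init[OF assms(6)] .
  have "(Dinv (\<lambda>_. None) d \<longrightarrow> dom_can_win E V d 1 (\<lambda>_. None) Dom d)
     \<and> (SI (\<lambda>_. None) \<longrightarrow> dom_can_win E V d 1 (\<lambda>_. None) Sepy 1)
     \<and> (Dinv (\<lambda>_. None) d \<longrightarrow> dom_can_win E V d 1 (\<lambda>_. None) Sepy 0)"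
    by (rule main[OF assms(6) refl])
  thus ?thesis using i by blast
qed

end
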